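(* Let $F=\frac1{16}\begin{pmatrix}1&2&1\\2&4&2\\1&2&1\end{pmatrix}$ (Gaussian blur filter). Then the equation $F*X=B$ with the zero boundary condition, for unknown $X\in\mathbb{R}^{m\times n}$, has a unique solution for every $B\in\mathbb{R}^{m\times n}$ (for all $m,n\in\mathbb{N}$).
   Context: For $F=[f_{ij}]\in\mathbb{R}^{3\times3}$ and $X=[x_{ij}]\in\mathbb{R}^{m\times n}$, the convolution $F*X\in\mathbb{R}^{m\times n}$ is defined by $[F*X]_{ij}=\sum_{l_1=1}^3\sum_{l_2=1}^3 f_{l_1l_2}\,x_{i-l_1+2,\,j-l_2+2}$ for $1\le i\le m$, $1\le j\le n$, where under the zero boundary condition all values $x_{ij}$ with $i\in\{0,m+1\}$ or $j\in\{0,n+1\}$ are $0$. *)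

theory Defs
  imports Complex_Main
begin

text \<open>An m x n real matrix is represented as a function nat => nat => real whose entries
  outside the index range {1..m} x {1..n} are zero (this encodes the zero boundary condition).\<close>

definition is_mat :: "nat \<Rightarrow> nat \<Rightarrow> (nat \<Rightarrow> nat \<Rightarrow> real) \<Rightarrow> bool" where
  "is_mat m n X \<longleftrightarrow> (\<forall>i j. \<not> (1 \<le> i \<and> i \<le> m \<and> 1 \<le> j \<and> j \<le> n) \<longrightarrow> X i j = 0)"

text \<open>Indices i-l1+2 are computed in int to avoid truncation.\<close>

definition xval :: "nat \<Rightarrow> nat \<Rightarrow> (nat \<Rightarrow> nat \<Rightarrow> real) \<Rightarrow> int \<Rightarrow> int \<Rightarrow> real" where
  "xval m n X a b = (if 1 \<le> a \<and> a \<le> int m \<and> 1 \<le> b \<and> b \<le> int n then X (nat a) (nat b) else 0)"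

definition conv0 :: "nat \<Rightarrow> nat \<Rightarrow> (nat \<Rightarrow> nat \<Rightarrow> real) \<Rightarrow> (nat \<Rightarrow> nat \<Rightarrow> real) \<Rightarrow> (nat \<Rightarrow> nat \<Rightarrow> real)" where
  "conv0 m n F X = (\<lambda>i j. if 1 \<le> i \<and> i \<le> m \<and> 1 \<le> j \<and> j \<le> n then
      (\<Sum>l1\<in>{1..3::nat}. \<Sum>l2\<in>{1..3::nat}.
         F l1 l2 * xval m n X (int i - int l1 + 2) (int j - int l2 + 2))
    else 0)"

definition gauss_filter :: "nat \<Rightarrow> nat \<Rightarrow> real" where
  "gauss_filter l1 l2 = (1/16) * (if l1 = 2 then 2 else 1) * (if l2 = 2 then 2 else 1)"

end

theory Submission
  imports Defs
begin

definition is_vec :: "nat \<Rightarrow> (nat \<Rightarrow> real) \<Rightarrow> bool" where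
  "is_vec k x \<longleftrightarrow> (\<forall>i. \<not> (1 \<le> i \<and> i \<le> k) \<longrightarrow> x i = 0)"

lemma hom1:
  assumes v: "is_vec k x"
    and h: "\<And>i. 1 \<le> i \<Longrightarrow> i \<le> k \<Longrightarrow> x (i-1) + 2 * x i + x (i+1) = 0"
  shows "x = (\<lambda>_. 0)"
proof -
  have x0: "x 0 = 0" using v by (simp add: is_vec_def)
  have step: "i \<le> k \<longrightarrow> x i = (-1)^(i+1) * real i * x 1 \<and> x (Suc i) = (-1)^(i+2) * real (Suc i) * x 1" for i
  proof (induction i)
    case 0 then show ?case using x0 by simp
  next
    case (Suc i)
    show ?case
    proof
      assume a: "Suc i \<le> k"
      then have IH: "x i = (-1)^(i+1) * real i * x 1" "x (Suc i) = (-1)^(i+2) * real (Suc i) * x 1"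
        using Suc by auto
      have "x (Suc i - 1) + 2 * x (Suc i) + x (Suc i + 1) = 0" using h[of "Suc i"] a by simp
      then have e: "x (Suc (Suc i)) = - x i - 2 * x (Suc i)" by simp
      define s :: real where "s = (-1)^(i+1)"
      have p: "(-1::real)^(i+2) = - s" "(-1::real)^(Suc i+2) = s" "(-1::real)^(Suc i+1) = -s"
        by (simp_all add: s_def)
      have "x (Suc (Suc i)) = s * real (Suc (Suc i)) * x 1"
        unfolding e IH p s_def[symmetric] by (simp add: algebra_simps)
      then show "x (Suc i) = (-1)^(Suc i+1) * real (Suc i) * x 1 \<and> x (Suc (Suc i)) = (-1)^(Suc i+2) * real (Suc (Suc i)) * x 1"
        using IH p by simp
    qed
  qed
  have "x (k+1) = 0" using v by (simp add: is_vec_def)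
  moreover have "x (k+1) = (-1)^(k+2) * real (k+1) * x 1" using step[of k] by simp
  ultimately have x1: "x 1 = 0" by simp
  show ?thesis
  proof
    fix i
    show "x i = 0"
    proof (cases "i \<le> k")
      case True then show ?thesis using step[of i] x1 by simp
    next
      case False then show ?thesis using v by (simp add: is_vec_def)
    qed
  qed
qed

lemma inj1:
  assumes "is_vec k x" "is_vec k y"
    and h: "\<And>i. 1 \<le> i \<Longrightarrow> i \<le> k \<Longrightarrow> x (i-1) + 2 * x i + x (i+1) = y (i-1) + 2 * y i + y (i+1)"
  shows "x = y"
proof -
  have "(\<lambda>i. x i - y i) = (\<lambda>_. 0)"
  proof (rule hom1[of k])
    show "is_vec k (\<lambda>i. x i - y i)" using assms(1,2) by (simp add: is_vec_def)
    fix i assume "1 \<le> i" "i \<le> k"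
    then have "x (i-1) + 2 * x i + x (i+1) = y (i-1) + 2 * y i + y (i+1)" by (rule h)
    then show "(x (i-1) - y (i-1)) + 2 * (x i - y i) + (x (i+1) - y (i+1)) = 0" by simp
  qed
  then show ?thesis by (simp add: fun_eq_iff)
qed

fun pseq :: "(nat \<Rightarrow> real) \<Rightarrow> nat \<Rightarrow> real" where
  "pseq b 0 = 0"
| "pseq b (Suc 0) = 0"
| "pseq b (Suc (Suc i)) = b (Suc i) - 2 * pseq b (Suc i) - pseq b i"

definition qseq :: "nat \<Rightarrow> real" where "qseq i = (-1)^(i+1) * real i"

lemma qseq_rec: "qseq (Suc (Suc i)) = - 2 * qseq (Suc i) - qseq i"
  by (simp add: qseq_def algebra_simps)

lemma surj1:
  "\<exists>x. is_vec k x \<and> (\<forall>i. 1 \<le> i \<and> i \<le> k \<longrightarrow> x (i-1) + 2 * x i + x (i+1) = b i)"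
proof -
  define t where "t = - pseq b (k+1) / qseq (k+1)"
  define z where "z i = pseq b i + t * qseq i" for i
  have qnz: "qseq (k+1) \<noteq> 0" by (simp add: qseq_def)
  have z0: "z 0 = 0" by (simp add: z_def qseq_def)
  have zk: "z (k+1) = 0" using qnz by (simp add: z_def t_def)
  have zrec: "z (Suc (Suc i)) = b (Suc i) - 2 * z (Suc i) - z i" for i
    by (simp add: z_def qseq_rec algebra_simps)
  define x where "x i = (if 1 \<le> i \<and> i \<le> k then z i else 0)" for i
  have xz: "i \<le> k + 1 \<Longrightarrow> x i = z i" for i
    using z0 zk by (cases "i = 0"; cases "i = k+1") (auto simp: x_def)
  show ?thesis
  proof (intro exI conjI allI impI)
    show "is_vec k x" by (simp add: is_vec_def x_def)
  next
    fix i assume a: "1 \<le> i \<and> i \<le> k"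
    then obtain j where j: "i = Suc j" by (cases i) auto
    have "x (i-1) + 2 * x i + x (i+1) = z j + 2 * z (Suc j) + z (Suc (Suc j))"
      using a j xz by simp
    also have "\<dots> = b i" using zrec[of j] j by simp
    finally show "x (i-1) + 2 * x i + x (i+1) = b i" .
  qed
qed

definition Rop :: "nat \<Rightarrow> nat \<Rightarrow> (nat \<Rightarrow> nat \<Rightarrow> real) \<Rightarrow> nat \<Rightarrow> nat \<Rightarrow> real" where
  "Rop m n X i j = (if 1 \<le> i \<and> i \<le> m \<and> 1 \<le> j \<and> j \<le> n then X i (j-1) + 2 * X i j + X i (j+1) else 0)"

definition Cop :: "nat \<Rightarrow> nat \<Rightarrow> (nat \<Rightarrow> nat \<Rightarrow> real) \<Rightarrow> nat \<Rightarrow> nat \<Rightarrow> real" where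
  "Cop m n Y i j = (if 1 \<le> i \<and> i \<le> m \<and> 1 \<le> j \<and> j \<le> n then Y (i-1) j + 2 * Y i j + Y (i+1) j else 0)"

lemma xval_eq: "is_mat m n X \<Longrightarrow> a \<ge> 0 \<Longrightarrow> b \<ge> 0 \<Longrightarrow> xval m n X a b = X (nat a) (nat b)"
  unfolding xval_def is_mat_def by (auto simp: le_nat_iff nat_le_iff)

lemma conv_eq:
  assumes X: "is_mat m n X"
  shows "conv0 m n gauss_filter X = (\<lambda>i j. Cop m n (Rop m n X) i j / 16)"
proof (intro ext)
  fix i j
  show "conv0 m n gauss_filter X i j = Cop m n (Rop m n X) i j / 16"
  proof (cases "1 \<le> i \<and> i \<le> m \<and> 1 \<le> j \<and> j \<le> n")
    case False then show ?thesis by (auto simp: conv0_def Cop_def)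
  next
    case True
    have sum3: "(\<Sum>l\<in>{1..3::nat}. f l) = f 1 + f 2 + f 3" for f :: "nat \<Rightarrow> real"
      by (simp add: numeral_3_eq_3 atLeastAtMostSuc_conv add.commute add.left_commute numeral_2_eq_2)
    have X0: "\<And>a b. \<not> (1 \<le> a \<and> a \<le> m \<and> 1 \<le> b \<and> b \<le> n) \<Longrightarrow> X a b = 0" using X by (simp add: is_mat_def)
    have Rm: "Rop m n X (i-1) j = X (i-1) (j-1) + 2 * X (i-1) j + X (i-1) (j+1)"
      using True X0 by (auto simp: Rop_def)
    have Rp: "Rop m n X (i+1) j = X (i+1) (j-1) + 2 * X (i+1) j + X (i+1) (j+1)"
      using True X0 by (auto simp: Rop_def)
    have R0: "Rop m n X i j = X i (j-1) + 2 * X i j + X i (j+1)"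
      using True by (auto simp: Rop_def)
    have ni: "nat (int i - 1 + 2) = i + 1" "nat (int i - 2 + 2) = i" "nat (int i - 3 + 2) = i - 1"
      "nat (int j - 1 + 2) = j + 1" "nat (int j - 2 + 2) = j" "nat (int j - 3 + 2) = j - 1"
      using True by auto
    have nn: "int i - 1 + 2 \<ge> 0" "int i - 2 + 2 \<ge> 0" "int i - 3 + 2 \<ge> 0"
      "int j - 1 + 2 \<ge> 0" "int j - 2 + 2 \<ge> 0" "int j - 3 + 2 \<ge> 0"
      using True by auto
    have c: "conv0 m n gauss_filter X i j =
      (1/16) * (X (i+1) (j+1) + 2 * X (i+1) j + X (i+1) (j-1)
       + 2 * X i (j+1) + 4 * X i j + 2 * X i (j-1)
       + X (i-1) (j+1) + 2 * X (i-1) j + X (i-1) (j-1))"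
      unfolding conv0_def sum3 using True by (simp add: gauss_filter_def xval_eq[OF X] nat_add_distrib nat_diff_distrib)
    have d: "Cop m n (Rop m n X) i j = Rop m n X (i-1) j + 2 * Rop m n X i j + Rop m n X (i+1) j"
      using True by (simp add: Cop_def)
    show ?thesis unfolding c d Rm Rp R0 by simp
  qed
qed

lemma Rop_mat: "is_mat m n (Rop m n X)"
  by (simp add: is_mat_def Rop_def)

theorem corollary4:
  fixes m n :: nat and B :: "nat \<Rightarrow> nat \<Rightarrow> real"
  assumes "is_mat m n B"
  shows "\<exists>!X. is_mat m n X \<and> conv0 m n gauss_filter X = B"
proof -
  have uniq: "X = X'" if X: "is_mat m n X" and X': "is_mat m n X'"
    and e: "conv0 m n gauss_filter X = conv0 m n gauss_filter X'" for X X'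
  proof -
    have C: "Cop m n (Rop m n X) = Cop m n (Rop m n X')"
    proof (intro ext)
      fix i j
      have "Cop m n (Rop m n X) i j / 16 = Cop m n (Rop m n X') i j / 16"
        using e unfolding conv_eq[OF X] conv_eq[OF X'] by metis
      then show "Cop m n (Rop m n X) i j = Cop m n (Rop m n X') i j" by simp
    qed
    have R: "Rop m n X = Rop m n X'"
    proof (intro ext)
      fix i j
      show "Rop m n X i j = Rop m n X' i j"
      proof (cases "1 \<le> j \<and> j \<le> n")
        case False then show ?thesis by (auto simp: Rop_def)
      next
        case True
        have "(\<lambda>i. Rop m n X i j) = (\<lambda>i. Rop m n X' i j)"
        proof (rule inj1[of m])
          show "is_vec m (\<lambda>i. Rop m n X i j)" "is_vec m (\<lambda>i. Rop m n X' i j)"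
            by (simp_all add: is_vec_def Rop_def)
          fix i assume i: "1 \<le> i" "i \<le> m"
          have "Cop m n (Rop m n X) i j = Cop m n (Rop m n X') i j" using C by simp
          then show "Rop m n X (i-1) j + 2 * Rop m n X i j + Rop m n X (i+1) j =
                     Rop m n X' (i-1) j + 2 * Rop m n X' i j + Rop m n X' (i+1) j"
            using i True unfolding Cop_def by simp
        qed
        then show ?thesis by metis
      qed
    qed
    show "X = X'"
    proof (intro ext)
      fix i j
      show "X i j = X' i j"
      proof (cases "1 \<le> i \<and> i \<le> m")
        case False then show ?thesis using X X' unfolding is_mat_def by (metis)
      next
        case True
        have "(\<lambda>j. X i j) = (\<lambda>j. X' i j)"
        proof (rule inj1[of n])
          show "is_vec n (\<lambda>j. X i j)" "is_vec n (\<lambda>j. X' i j)"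
            using X X' by (simp_all add: is_vec_def is_mat_def)
          fix j assume j: "1 \<le> j" "j \<le> n"
          have "Rop m n X i j = Rop m n X' i j" using R by simp
          then show "X i (j-1) + 2 * X i j + X i (j+1) = X' i (j-1) + 2 * X' i j + X' i (j+1)"
            using j True unfolding Rop_def by simp
        qed
        then show ?thesis by metis
      qed
    qed
  qed
  define col where "col j = (SOME y. is_vec m y \<and> (\<forall>i. 1 \<le> i \<and> i \<le> m \<longrightarrow> y (i-1) + 2 * y i + y (i+1) = 16 * B i j))" for j
  have col: "is_vec m (col j) \<and> (\<forall>i. 1 \<le> i \<and> i \<le> m \<longrightarrow> col j (i-1) + 2 * col j i + col j (i+1) = 16 * B i j)" for j
    unfolding col_def using surj1[of m "\<lambda>i. 16 * B i j"] by (rule someI_ex)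
  define Y where "Y i j = (if 1 \<le> j \<and> j \<le> n then col j i else 0)" for i j
  define row where "row i = (SOME x. is_vec n x \<and> (\<forall>j. 1 \<le> j \<and> j \<le> n \<longrightarrow> x (j-1) + 2 * x j + x (j+1) = Y i j))" for i
  have row: "is_vec n (row i) \<and> (\<forall>j. 1 \<le> j \<and> j \<le> n \<longrightarrow> row i (j-1) + 2 * row i j + row i (j+1) = Y i j)" for i
    unfolding row_def using surj1[of n "\<lambda>j. Y i j"] by (rule someI_ex)
  define X where "X i j = (if 1 \<le> i \<and> i \<le> m then row i j else 0)" for i j
  have Xm: "is_mat m n X" using row by (auto simp: is_mat_def X_def is_vec_def)
  have RY: "Rop m n X = Y"
  proof (intro ext)
    fix i j
    show "Rop m n X i j = Y i j"
    proof (cases "1 \<le> i \<and> i \<le> m \<and> 1 \<le> j \<and> j \<le> n")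
      case True then show ?thesis using row[of i] by (simp add: Rop_def X_def)
    next
      case False then show ?thesis using col[of j] by (auto simp: Rop_def Y_def is_vec_def)
    qed
  qed
  have CX: "conv0 m n gauss_filter X = B"
  proof (intro ext)
    fix i j
    show "conv0 m n gauss_filter X i j = B i j"
    proof (cases "1 \<le> i \<and> i \<le> m \<and> 1 \<le> j \<and> j \<le> n")
      case True then show ?thesis using col[of j]
        by (simp add: conv_eq[OF Xm] RY Cop_def Y_def)
    next
      case False
      then have "Cop m n (Rop m n X) i j = 0" unfolding Cop_def by auto
      moreover have "B i j = 0" using assms False unfolding is_mat_def by metis
      ultimately show ?thesis by (simp add: conv_eq[OF Xm])
    qed
  qed
  show ?thesis using Xm CX uniq by blast
qed

end
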